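(* Let $h\ge1$, $n$ and $m_{\mathrm H}$ be fixed, let $\gamma=(m_{\mathrm H}/n)^{1/(h+1)}$, and for $i\in\mathbb{N}$ let $(\ell_i,s_i)=(i,\mathrm{round}(\gamma i)+1)$. Then $$t_{\mathrm{new}}(\ell_i,s_i)=n\Big(1-\big(\tfrac{m_{\mathrm H}}{n}\big)^{\frac{h}{h+1}}-O(\tfrac1i)\Big)\quad (i\to\infty),$$ where for positive integers $s\le\ell$, $$t_{\mathrm{new}}(\ell,s)=n\Big(1-\frac{sC_{<s}-W_{<s}}{sC_{\le\ell}}\Big)-\frac{h}{h+1}\frac{\ell}{s}m_{\mathrm H}+\frac1s\Big(\frac{1}{C_{\le\ell}}-1\Big).$$
   Context: Here $q$ is a prime power, $n=q^3$, $g=\tfrac12q(q-1)$, and $m_{\mathrm H}$ is an integer with $2(g-1)<m_{\mathrm H}<n$ (so $0<\gamma<1$); $h\ge1$ is an integer. $\mathrm{round}(x)$ denotes the nearest integer to $x$. Counting quantities (over $\mathbb{Z}_{\ge0}^h$, with $|\mathbf{i}|=\sum_\mu i_\mu$): $C_{\le\ell}=\#\{\mathbf{j}\in\mathbb{Z}_{\ge0}^h:|\mathbf{j}|\le\ell\}$, $C_{<s}=\#\{\mathbf{i}\in\mathbb{Z}_{\ge0}^h:|\mathbf{i}|<s\}$, $W_{<s}=\sum_{\mathbf{i}\in\mathbb{Z}_{\ge0}^h,|\mathbf{i}|<s}|\mathbf{i}|$. *)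

theory Defs
  imports Complex_Main "HOL-Number_Theory.Prime_Powers" "HOL-Library.Landau_Symbols"
begin

text \<open>Points of Z_{>=0}^h are represented as lists of naturals of length h;
  |i| is the sum of the entries.\<close>

definition C_le :: "nat \<Rightarrow> nat \<Rightarrow> nat" where
  "C_le h l = card {j :: nat list. length j = h \<and> sum_list j \<le> l}"

definition C_lt :: "nat \<Rightarrow> nat \<Rightarrow> nat" where
  "C_lt h s = card {i :: nat list. length i = h \<and> sum_list i < s}"

definition W_lt :: "nat \<Rightarrow> nat \<Rightarrow> nat" where
  "W_lt h s = (\<Sum>i\<in>{i :: nat list. length i = h \<and> sum_list i < s}. sum_list i)"

definition t_new :: "nat \<Rightarrow> nat \<Rightarrow> nat \<Rightarrow> nat \<Rightarrow> nat \<Rightarrow> real" where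
  "t_new h n mH l s =
     real n * (1 - (real s * real (C_lt h s) - real (W_lt h s)) / (real s * real (C_le h l)))
     - (real h / real (h + 1)) * (real l / real s) * real mH
     + (1 / real s) * (1 / real (C_le h l) - 1)"

definition gamma :: "nat \<Rightarrow> nat \<Rightarrow> nat \<Rightarrow> real" where
  "gamma h n mH = (real mH / real n) powr (1 / real (h + 1))"

definition s_seq :: "nat \<Rightarrow> nat \<Rightarrow> nat \<Rightarrow> nat \<Rightarrow> nat" where
  "s_seq h n mH i = nat (round (gamma h n mH * real i)) + 1"

end

theory Submission
  imports Defs
begin

definition SS :: "nat \<Rightarrow> nat \<Rightarrow> nat list set" where
  "SS h l = {j. length j = h \<and> sum_list j \<le> l}"

lemma SS_finite: "finite (SS h l)"
proof -
  have "SS h l \<subseteq> {xs. set xs \<subseteq> {0..l} \<and> length xs = h}"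
    unfolding SS_def using member_le_sum_list by fastforce
  thus ?thesis using finite_lists_length_eq[of "{0..l}" h] finite_subset by blast
qed

lemma SS_0: "SS 0 l = {[]}" unfolding SS_def by auto

lemma SS_Suc1: "SS (Suc h) m = (\<Union>x\<in>{..m}. (\<lambda>j. x # j) ` SS h (m - x))"
  unfolding SS_def
  apply (rule set_eqI) apply (case_tac x) by (auto simp: image_iff)

lemma C_le_SS: "C_le h l = card (SS h l)" unfolding C_le_def SS_def by simp

lemma C_le_0: "C_le 0 l = 1" by (simp add: C_le_SS SS_0)

lemma C_le_Suc1: "C_le (Suc h) m = (\<Sum>x\<le>m. C_le h (m - x))"
proof -
  have "card (SS (Suc h) m) = (\<Sum>x\<le>m. card ((\<lambda>j. x # j) ` SS h (m - x)))"
    unfolding SS_Suc1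
    by (rule card_UN_disjoint) (auto simp: SS_finite)
  also have "\<dots> = (\<Sum>x\<le>m. C_le h (m - x))"
    by (simp add: card_image C_le_SS)
  finally show ?thesis by (simp add: C_le_SS)
qed

lemma C_le_binom: "C_le h l = (l + h choose h)"
proof (induction h arbitrary: l)
  case 0 thus ?case by (simp add: C_le_0)
next
  case (Suc h)
  note IHh = Suc.IH
  show ?case
  proof (induction l)
    case 0 thus ?case using IHh[of 0] by (simp add: C_le_Suc1)
  next
    case (Suc m)
    have "C_le (Suc h) (Suc m) = C_le h (Suc m) + C_le (Suc h) m"
      unfolding C_le_Suc1 sum.atMost_Suc_shift by simp
    also have "\<dots> = (Suc m + h choose h) + (m + Suc h choose Suc h)"
      using IHh[of "Suc m"] Suc.IH by simp
    finally show ?case by simp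
  qed
qed

lemma SS_Suc2: "SS (Suc h) m = (\<Union>i\<in>SS h m. (\<lambda>x. x # i) ` {..m - sum_list i})"
  unfolding SS_def
  apply (rule set_eqI) apply (case_tac x) by auto

lemma C_le_Suc2: "C_le (Suc h) m = (\<Sum>i\<in>SS h m. Suc m - sum_list i)"
proof -
  have "card (SS (Suc h) m) = (\<Sum>i\<in>SS h m. card ((\<lambda>x. x # i) ` {..m - sum_list i}))"
    unfolding SS_Suc2
    by (rule card_UN_disjoint) (auto simp: SS_finite)
  also have "\<dots> = (\<Sum>i\<in>SS h m. Suc m - sum_list i)"
    by (rule sum.cong) (auto simp: card_image inj_on_def SS_def Suc_diff_le)
  finally show ?thesis by (simp add: C_le_SS)
qed

lemma key_num:
  assumes "s \<ge> 1"
  shows "real s * real (C_lt h s) - real (W_lt h s) = real (C_le (Suc h) (s - 1))"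
proof -
  have e: "{i :: nat list. length i = h \<and> sum_list i < s} = SS h (s - 1)"
    unfolding SS_def using assms by auto
  have "real s * real (C_lt h s) - real (W_lt h s) = (\<Sum>i\<in>SS h (s-1). real s - real (sum_list i))"
    unfolding C_lt_def W_lt_def e by (simp add: sum_subtractf)
  also have "\<dots> = (\<Sum>i\<in>SS h (s-1). real (Suc (s - 1) - sum_list i))"
    by (rule sum.cong) (use assms in \<open>auto simp: SS_def of_nat_diff\<close>)
  also have "\<dots> = real (C_le (Suc h) (s - 1))"
    by (simp add: C_le_Suc2)
  finally show ?thesis .
qed

lemma C_le_real: "real (C_le h l) = pochhammer (real l + 1) h / fact h"
  unfolding C_le_binom binomial_gbinomial gbinomial_pochhammer' by simp

lemma prod_diff_bound:
  fixes a b :: "nat \<Rightarrow> real"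
  assumes "finite I" "\<And>j. j \<in> I \<Longrightarrow> \<bar>a j\<bar> \<le> M" "\<And>j. j \<in> I \<Longrightarrow> \<bar>b j\<bar> \<le> M" "M \<ge> 1"
  shows "\<bar>prod a I - prod b I\<bar> \<le> M ^ card I * (\<Sum>j\<in>I. \<bar>a j - b j\<bar>)"
  using assms
proof (induction I rule: finite_induct)
  case empty thus ?case by simp
next
  case (insert x F)
  have IH: "\<bar>prod a F - prod b F\<bar> \<le> M ^ card F * (\<Sum>j\<in>F. \<bar>a j - b j\<bar>)"
    using insert by auto
  have ax: "\<bar>a x\<bar> \<le> M" and bx: "\<bar>b x\<bar> \<le> M" using insert by auto
  have pb: "\<bar>prod b F\<bar> \<le> M ^ card F"
    unfolding abs_prod
    using prod_mono[of F "\<lambda>j. \<bar>b j\<bar>" "\<lambda>_. M"] insert by auto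
  have Mp: "M ^ card F \<le> M ^ Suc (card F)" using \<open>M \<ge> 1\<close> by simp
  have S0: "0 \<le> (\<Sum>j\<in>F. \<bar>a j - b j\<bar>)" by (simp add: sum_nonneg)
  have "prod a (insert x F) - prod b (insert x F) = a x * (prod a F - prod b F) + (a x - b x) * prod b F"
    using insert by (simp add: algebra_simps)
  hence "\<bar>prod a (insert x F) - prod b (insert x F)\<bar> \<le> \<bar>a x\<bar> * \<bar>prod a F - prod b F\<bar> + \<bar>a x - b x\<bar> * \<bar>prod b F\<bar>"
    by (metis abs_mult abs_triangle_ineq)
  also have "\<dots> \<le> M * (M ^ card F * (\<Sum>j\<in>F. \<bar>a j - b j\<bar>)) + \<bar>a x - b x\<bar> * M ^ card F"
    using \<open>M \<ge> 1\<close> by (intro add_mono mult_mono IH ax pb) auto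
  also have "\<dots> \<le> M ^ Suc (card F) * (\<Sum>j\<in>F. \<bar>a j - b j\<bar>) + \<bar>a x - b x\<bar> * M ^ Suc (card F)"
    by (intro add_mono mult_left_mono Mp) (auto simp: S0)
  also have "\<dots> = M ^ card (insert x F) * (\<Sum>j\<in>insert x F. \<bar>a j - b j\<bar>)"
    using insert by (simp add: algebra_simps)
  finally show ?case .
qed

lemma alg: "(c::real) > 0 \<Longrightarrow> S > 0 \<Longrightarrow> Q > 0 \<Longrightarrow> H \<ge> 0 \<Longrightarrow>
   (S * P / ((H + 1) * c)) / (S * (Q / c)) = P / Q / (H + 1)"
  by (simp add: divide_simps)

lemma alg2: "(n::real) > 0 \<Longrightarrow> (n * (1 - X) - c * L * (n * G) + (1 / s) * D) / n
   = 1 - X - c * L * G + (1 / (n * s)) * D"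
  by (simp add: divide_simps) (simp add: algebra_simps)

lemma ratio_eq:
  assumes "s \<ge> 1"
  shows "real (C_le (Suc h) (s - 1)) / (real s * real (C_le h l))
         = (\<Prod>j\<in>{0..<h}. (real s + 1 + real j) / (real l + 1 + real j)) / (real h + 1)"
proof -
  have rs: "real (s - 1) + 1 = real s" using assms by simp
  have Qpos: "pochhammer (real l + 1) h > 0" by (simp add: pochhammer_pos)
  have F: "(fact h :: real) > 0" by simp
  have eq1: "real (C_le (Suc h) (s - 1)) = real s * pochhammer (real s + 1) h / ((real h + 1) * fact h)"
    unfolding C_le_real rs pochhammer_rec by (simp add: algebra_simps)
  have eq2: "real (C_le h l) = pochhammer (real l + 1) h / fact h" by (rule C_le_real)
  have "real (C_le (Suc h) (s - 1)) / (real s * real (C_le h l))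
      = (real s * pochhammer (real s + 1) h / ((real h + 1) * fact h)) / (real s * (pochhammer (real l + 1) h / fact h))"
    by (simp only: eq1 eq2)
  also have "\<dots> = pochhammer (real s + 1) h / pochhammer (real l + 1) h / (real h + 1)"
    using assms Qpos F alg[of "fact h" "real s" "pochhammer (real l + 1) h" "real h" "pochhammer (real s + 1) h"] by simp
  also have "\<dots> = (\<Prod>j\<in>{0..<h}. (real s + 1 + real j) / (real l + 1 + real j)) / (real h + 1)"
    unfolding pochhammer_prod prod_dividef by simp
  finally show ?thesis .
qed

lemma main_bound:
  fixes g :: real and h n mH l s :: nat
  assumes g0: "0 < g" and g1: "g \<le> 1" and l1: "l \<ge> 1" and sd: "\<bar>real s - g * real l\<bar> \<le> 3/2"
    and sg: "real s \<ge> g * real l" and s1: "s \<ge> 1" and n1: "n \<ge> 1"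
    and mH: "real mH = real n * g ^ (h + 1)"
  shows "\<bar>1 - g ^ h - t_new h n mH l s / real n\<bar>
          \<le> (3 ^ h * real h * (real h + 3) + 3 / (2 * g) + 1 / g) / real l"
proof -
  define a where "a j = (real s + 1 + real j) / (real l + 1 + real j)" for j :: nat
  define B where "B = real (C_le h l)"
  have "(l + h choose h) \<ge> (1::nat)" using zero_less_binomial[of h "l+h"] by linarith
  hence B1: "B \<ge> 1" unfolding B_def C_le_binom by simp
  have rat: "real (C_le (Suc h) (s - 1)) / (real s * B) = prod a {0..<h} / (real h + 1)"
    unfolding B_def a_def using ratio_eq[OF s1] by simp
  have spos: "real s > 0" using s1 by simp
  have lpos: "real l > 0" using l1 by simp
  have npos: "real n > 0" using n1 by simp
  have tn: "t_new h n mH l s / real n =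
      1 - prod a {0..<h} / (real h + 1) - (real h / real (h + 1)) * (real l / real s) * g ^ (h + 1)
      + (1 / (real n * real s)) * (1 / B - 1)"
  proof -
    have "t_new h n mH l s = real n * (1 - real (C_le (Suc h) (s - 1)) / (real s * B))
     - (real h / real (h + 1)) * (real l / real s) * real mH + (1 / real s) * (1 / B - 1)"
      unfolding t_new_def key_num[OF s1] B_def by simp
    also have "\<dots> = real n * (1 - real (C_le (Suc h) (s - 1)) / (real s * B))
     - (real h / real (h + 1)) * (real l / real s) * (real n * g ^ (h + 1)) + (1 / real s) * (1 / B - 1)"
      unfolding mH ..
    finally have eq: "t_new h n mH l s = real n * (1 - real (C_le (Suc h) (s - 1)) / (real s * B))
     - (real h / real (h + 1)) * (real l / real s) * (real n * g ^ (h + 1)) + (1 / real s) * (1 / B - 1)" .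
    show ?thesis unfolding eq rat by (rule alg2[OF npos])
  
  qed
  define T1 where "T1 = (prod a {0..<h} - g ^ h) / (real h + 1)"
  define T2 where "T2 = (real h / real (h + 1)) * g ^ h * ((g * real l - real s) / real s)"
  define T3 where "T3 = - (1 / (real n * real s)) * (1 / B - 1)"
  have split: "1 - g ^ h - t_new h n mH l s / real n = T1 + T2 + T3"
    unfolding tn T1_def T2_def T3_def using spos by (simp add: divide_simps; simp add: algebra_simps)
  have ab: "\<bar>a j\<bar> \<le> 3" "\<bar>a j - g\<bar> \<le> (real h + 3) / real l" if "j \<in> {0..<h}" for j
  proof -
    have d: "real l + 1 + real j > 0" by simp
    have "real s + 1 + real j \<le> 3 * (real l + 1 + real j)"
    proof -
      have "g * real l \<le> real l" using g0 g1 lpos by (simp add: mult_left_le_one_le)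
      moreover have "real s \<le> g * real l + 3/2" using sd by linarith
      ultimately have "real s + 1 + real j \<le> 3 * real l + 3 + 3 * real j"
        using lpos of_nat_0_le_iff[of j, where ?'a=real] by linarith
      thus ?thesis by (simp add: algebra_simps)
    qed
    thus "\<bar>a j\<bar> \<le> 3" unfolding a_def using d by (simp add: divide_le_eq)
    have "a j - g = ((real s - g * real l) + (1 - g) * (1 + real j)) / (real l + 1 + real j)"
      unfolding a_def using d by (simp add: field_simps)
    moreover have "\<bar>(real s - g * real l) + (1 - g) * (1 + real j)\<bar> \<le> real h + 3"
    proof -
      have "\<bar>(1 - g) * (1 + real j)\<bar> \<le> 1 + real j" using g0 g1
        by (simp add: abs_mult mult_left_le_one_le)
      moreover have "real j \<le> real h" using that by simp
      ultimately show ?thesis using sd by linarith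
    qed
    moreover have "real l \<le> real l + 1 + real j" by simp
    ultimately show "\<bar>a j - g\<bar> \<le> (real h + 3) / real l"
      using lpos d by (simp add: abs_div frac_le)
  qed
  have "\<bar>prod a {0..<h} - prod (\<lambda>_. g) {0..<h}\<bar> \<le> 3 ^ card {0..<h} * (\<Sum>j\<in>{0..<h}. \<bar>a j - g\<bar>)"
    by (rule prod_diff_bound) (use ab g0 g1 in auto)
  also have "\<dots> \<le> 3 ^ h * (\<Sum>j\<in>{0..<h}. (real h + 3) / real l)"
    unfolding card_atLeastLessThan diff_zero
    by (intro mult_left_mono sum_mono ab(2)) auto
  finally have P: "\<bar>prod a {0..<h} - g ^ h\<bar> \<le> 3 ^ h * real h * (real h + 3) / real l" by simp
  have T1b: "\<bar>T1\<bar> \<le> 3 ^ h * real h * (real h + 3) / real l"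
  proof -
    have "\<bar>T1\<bar> = \<bar>prod a {0..<h} - g ^ h\<bar> / (real h + 1)" unfolding T1_def by (simp add: abs_div)
    also have "\<dots> \<le> \<bar>prod a {0..<h} - g ^ h\<bar>" by (simp add: divide_le_eq mult_le_cancel_left1)
    finally show ?thesis using P by linarith
  qed
  have inv_s: "1 / real s \<le> 1 / (g * real l)"
    using sg g0 lpos by (simp add: frac_le)
  have T2b: "\<bar>T2\<bar> \<le> 3 / (2 * g) / real l"
  proof -
    have c1: "\<bar>real h / real (h + 1)\<bar> \<le> 1" by simp
    have c2: "\<bar>g ^ h\<bar> \<le> 1" using g0 g1 by (simp add: power_le_one)
    have c3: "\<bar>(g * real l - real s) / real s\<bar> \<le> (3/2) * (1 / real s)"
      using sd spos by (simp add: abs_div divide_le_eq abs_minus_commute)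
    have "\<bar>T2\<bar> \<le> 1 * 1 * ((3/2) * (1 / real s))" unfolding T2_def abs_mult
      by (intro mult_mono c1 c2 c3) auto
    also have "\<dots> \<le> (3/2) * (1 / (g * real l))" using inv_s by simp
    finally show ?thesis by (simp add: field_simps)
  qed
  have T3b: "\<bar>T3\<bar> \<le> 1 / g / real l"
  proof -
    have c1: "\<bar>1 / B - 1\<bar> \<le> 1" using B1 by (simp add: abs_if divide_le_eq)
    have c2: "1 / (real n * real s) \<le> 1 / real s" using npos spos n1
      by (simp add: frac_le)
    have "\<bar>T3\<bar> = (1 / (real n * real s)) * \<bar>1 / B - 1\<bar>" unfolding T3_def abs_mult abs_minus
      using npos spos by simp
    also have "\<dots> \<le> 1 / real s * 1" by (intro mult_mono c1 c2) (use npos spos in auto)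
    also have "\<dots> \<le> 1 / (g * real l)" using inv_s by simp
    finally show ?thesis by simp
  qed
  have "\<bar>T1 + T2 + T3\<bar> \<le> 3 ^ h * real h * (real h + 3) / real l + 3 / (2 * g) / real l + 1 / g / real l"
    using T1b T2b T3b abs_triangle_ineq[of "T1+T2" T3] abs_triangle_ineq[of T1 T2] by linarith
  thus ?thesis unfolding split by (simp add: add_divide_distrib)
qed

theorem theorem5:
  fixes q n h mH :: nat
  assumes "primepow q"
    and "n = q ^ 3"
    and "2 * (real q * (real q - 1) / 2 - 1) < real mH"
    and "mH < n"
    and "h \<ge> 1"
  shows "\<exists>e :: nat \<Rightarrow> real. e \<in> O(\<lambda>i. 1 / real i) \<and>
           (\<forall>\<^sub>F i in at_top.
              t_new h n mH i (s_seq h n mH i)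
                = real n * (1 - (real mH / real n) powr (real h / real (h + 1)) - e i))"
proof -
  have q2: "q \<ge> 2" using primepow_gt_Suc_0[OF assms(1)] by simp
  have "real q * (real q - 1) \<ge> 2 * 1"
    using q2 by (intro mult_mono) auto
  moreover have "2 * (real q * (real q - 1) / 2 - 1) = real q * (real q - 1) - 2" by simp
  ultimately have mH0: "real mH > 0" using assms(3) by linarith
  have n1: "n \<ge> 1" using assms(4) by simp
  hence npos: "real n > 0" by simp
  define r where "r = real mH / real n"
  have r0: "r > 0" unfolding r_def using mH0 npos by simp
  have r1: "r < 1" unfolding r_def using assms(4) npos by (simp add: divide_less_eq)
  define g where "g = gamma h n mH"
  have gdef: "g = r powr (1 / real (h + 1))" unfolding g_def gamma_def r_def by simp
  have g0: "g > 0" unfolding gdef using r0 by simp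
  have g1: "g < 1" unfolding gdef using r0 r1
    using powr_less_mono2[of "1 / real (h + 1)" r 1] by simp
  have gpow: "g ^ k = r powr (real k / real (h + 1))" for k
    unfolding gdef using r0 by (simp add: powr_realpow[symmetric] powr_powr)
  have mHeq: "real mH = real n * g ^ (h + 1)"
    using gpow[of "h+1"] r0 npos unfolding r_def by simp
  have rh: "r powr (real h / real (h + 1)) = g ^ h" using gpow[of h] by simp
  define e where "e i = 1 - g ^ h - t_new h n mH i (s_seq h n mH i) / real n" for i
  define C where "C = 3 ^ h * real h * (real h + 3) + 3 / (2 * g) + 1 / g"
  have eq: "t_new h n mH i (s_seq h n mH i)
                = real n * (1 - (real mH / real n) powr (real h / real (h + 1)) - e i)" for i
    unfolding e_def rh[unfolded r_def] using npos by (simp add: field_simps)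
  have bound: "\<bar>e i\<bar> \<le> C * \<bar>1 / real i\<bar>" if i1: "i \<ge> 1" for i
  proof -
    define s where "s = s_seq h n mH i"
    have gi: "g * real i \<ge> 0" using g0 by simp
    have rnd: "\<bar>of_int (round (g * real i)) - g * real i\<bar> \<le> 1/2" by (rule of_int_round_abs_le)
    have rnn: "round (g * real i) \<ge> 0"
    proof -
      have "(-1::real) < of_int (round (g * real i))" using rnd gi by linarith
      hence "-1 < round (g * real i)" by linarith
      thus ?thesis by linarith
    qed
    have sr: "real s = of_int (round (g * real i)) + 1"
      unfolding s_def s_seq_def g_def[symmetric] using rnn by simp
    have sd: "\<bar>real s - g * real i\<bar> \<le> 3/2" using sr rnd by linarith
    have sg: "real s \<ge> g * real i" using sr rnd by linarith
    have s1: "s \<ge> 1" unfolding s_def s_seq_def by simp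
    have "\<bar>e i\<bar> \<le> C / real i"
      unfolding e_def C_def s_def[symmetric]
      by (rule main_bound[OF g0 _ i1 sd sg s1 n1 mHeq]) (use g1 in simp)
    thus ?thesis using i1 by simp
  qed
  have "e \<in> O(\<lambda>i. 1 / real i)"
  proof (rule bigoI[of _ C])
    show "\<forall>\<^sub>F x in at_top. norm (e x) \<le> C * norm (1 / real x)"
      using eventually_ge_at_top[of "1::nat"]
    proof eventually_elim
      case (elim x)
      show ?case unfolding real_norm_def by (rule bound[OF elim])
    qed
  qed
  moreover have "\<forall>\<^sub>F i in at_top. t_new h n mH i (s_seq h n mH i)
                = real n * (1 - (real mH / real n) powr (real h / real (h + 1)) - e i)"
    using eq by simp
  ultimately show ?thesis by blast
qed

end
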